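(* Let $d$ be a metric on $\mathbb R^n$ induced by a norm, $\delta>0$, and let $\tilde w:\mathcal D^n(\delta)\to\mathcal D^n(\delta)$ be the $\delta$-roundoff of a contraction $w:\mathbb R^n\to\mathbb R^n$ on $(\mathbb R^n,d)$ with contractivity factor $\lambda\in[0,1)$ and fixed point $x_f$. Let $r_0=\theta(1-\lambda)^{-1}$ and $$\Lambda(x_f,r_0)=\{\tilde y\in\mathcal D^n(\delta):d(\tilde y,x_f)\le\theta(1-\lambda)^{-1}\}.$$ Then $\Lambda(x_f,r_0)$ is an absorbing set for $\tilde w$ in $\mathcal D^n(\delta)$, and $\tilde w(\Lambda(x_f,r_0))\subset\Lambda(x_f,r_0)$.
   Context: For $m\in\mathbb Z^n$, $C_\delta(m)=\prod_{j=1}^n[(m_j-\tfrac12)\delta,(m_j+\tfrac12)\delta)$; $\mathcal D^n(\delta)=\{\delta m:m\in\mathbb Z^n\}\subset\mathbb R^n$. The $\delta$-roundoff of $x\in\mathbb R^n$ is $\tilde x=\delta m$ where $x\in C_\delta(m)$; the $\delta$-roundoff of $w$ is $\tilde w(\tilde x)=\widetilde{w(\tilde x)}$. $\theta:=\tfrac12\operatorname{diam}_d(C_\delta(0))$. A set $\Lambda\subset\mathcal D^n(\delta)$ is an absorbing set for $\tilde w$ (in $\mathcal D^n(\delta)$) if for every $\tilde x\in\mathcal D^n(\delta)$ there is $N$ with $\tilde w^{\circ i}(\tilde x)\in\Lambda$ for all $i\ge N$. *)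

theory Defs
  imports "HOL-Analysis.Analysis"
begin

text \<open>A norm on R^n (not necessarily the Euclidean one); the metric is d(x,y) = N(x - y).\<close>
definition is_norm :: "(real^'n \<Rightarrow> real) \<Rightarrow> bool" where
  "is_norm N \<longleftrightarrow> (\<forall>x. 0 \<le> N x) \<and> (\<forall>x. N x = 0 \<longleftrightarrow> x = 0)
     \<and> (\<forall>c x. N (c *\<^sub>R x) = \<bar>c\<bar> * N x) \<and> (\<forall>x y. N (x + y) \<le> N x + N y)"

definition cell :: "real \<Rightarrow> ('n::finite \<Rightarrow> int) \<Rightarrow> (real^'n) set" where
  "cell \<delta> m = {x. \<forall>j. (real_of_int (m j) - 1/2) * \<delta> \<le> x $ j \<and> x $ j < (real_of_int (m j) + 1/2) * \<delta>}"

definition grid :: "real \<Rightarrow> (real^'n::finite) set" where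
  "grid \<delta> = {x. \<exists>m::'n \<Rightarrow> int. x = (\<chi> j. \<delta> * real_of_int (m j))}"

text \<open>delta-roundoff: the lattice point delta*m with x in C_delta(m).\<close>
definition roundoff :: "real \<Rightarrow> real^'n \<Rightarrow> real^'n" where
  "roundoff \<delta> x = (\<chi> j. \<delta> * real_of_int \<lfloor>x $ j / \<delta> + 1/2\<rfloor>)"

definition theta :: "(real^'n::finite \<Rightarrow> real) \<Rightarrow> real \<Rightarrow> real" where
  "theta N \<delta> = (SUP p \<in> cell \<delta> (\<lambda>_. 0) \<times> cell \<delta> (\<lambda>_. 0). N (fst p - snd p)) / 2"

definition absorbing :: "real \<Rightarrow> (real^'n::finite \<Rightarrow> real^'n) \<Rightarrow> (real^'n) set \<Rightarrow> bool" where
  "absorbing \<delta> f \<Lambda> \<longleftrightarrow> \<Lambda> \<subseteq> grid \<delta> \<and>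
     (\<forall>x \<in> grid \<delta>. \<exists>K. \<forall>i\<ge>K. (f ^^ i) x \<in> \<Lambda>)"

end

theory Submission
  imports Defs
begin

lemma norm_props:
  fixes N :: "real^'n \<Rightarrow> real"
  assumes "is_norm N"
  shows "\<And>x. 0 \<le> N x" "\<And>x. N x = 0 \<longleftrightarrow> x = 0" "\<And>c x. N (c *\<^sub>R x) = \<bar>c\<bar> * N x"
    "\<And>x y. N (x + y) \<le> N x + N y"
  using assms unfolding is_norm_def by auto

lemma N_sum:
  fixes N :: "real^'n \<Rightarrow> real"
  assumes "is_norm N" "finite S"
  shows "N (\<Sum>i\<in>S. f i) \<le> (\<Sum>i\<in>S. N (f i))"
  using assms(2)
proof (induction S rule: finite_induct)
  case empty
  have "N 0 = 0" using norm_props(2)[OF assms(1)] by simp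
  then show ?case by simp
next
  case (insert x F)
  then show ?case using norm_props(4)[OF assms(1), of "f x" "sum f F"] by simp
qed

lemma N_upper:
  fixes N :: "real^'n \<Rightarrow> real"
  assumes "is_norm N"
  shows "N x \<le> (\<Sum>j\<in>UNIV. \<bar>x $ j\<bar> * N (axis j 1))"
proof -
  have "x = (\<Sum>j\<in>UNIV. (x $ j) *\<^sub>R axis j 1)"
    using basis_expansion[of x] by (simp add: scalar_mult_eq_scaleR)
  then have "N x = N (\<Sum>j\<in>UNIV. (x $ j) *\<^sub>R axis j 1)" by simp
  also have "\<dots> \<le> (\<Sum>j\<in>UNIV. N ((x $ j) *\<^sub>R axis j 1))" by (rule N_sum[OF assms]) simp
  also have "\<dots> = (\<Sum>j\<in>UNIV. \<bar>x $ j\<bar> * N (axis j 1))"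
    using norm_props(3)[OF assms] by simp
  finally show ?thesis .
qed

lemma N_upper2:
  fixes N :: "real^'n \<Rightarrow> real"
  assumes "is_norm N"
  shows "N x \<le> (\<Sum>j\<in>UNIV. N (axis j 1)) * norm x"
proof -
  have "N x \<le> (\<Sum>j\<in>UNIV. \<bar>x $ j\<bar> * N (axis j 1))" by (rule N_upper[OF assms])
  also have "\<dots> \<le> (\<Sum>j\<in>UNIV. norm x * N (axis j 1))"
    by (rule sum_mono, rule mult_right_mono, simp add: component_le_norm_cart, simp add: norm_props(1)[OF assms])
  also have "\<dots> = norm x * (\<Sum>j\<in>UNIV. N (axis j 1))" by (simp add: sum_distrib_left)
  finally show ?thesis by (simp add: mult.commute)
qed

lemma N_cont:
  fixes N :: "real^'n \<Rightarrow> real"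
  assumes "is_norm N"
  shows "continuous_on S N"
proof -
  define B where "B = (\<Sum>j\<in>UNIV. N (axis j 1::real^'n))"
  have B0: "0 \<le> B" unfolding B_def by (rule sum_nonneg) (simp add: norm_props(1)[OF assms])
  have tri: "\<bar>N x - N y\<bar> \<le> N (x - y)" for x y
  proof -
    have "N x \<le> N (x - y) + N y" using norm_props(4)[OF assms, of "x - y" y] by simp
    moreover have "N y \<le> N (y - x) + N x" using norm_props(4)[OF assms, of "y - x" x] by simp
    moreover have "N (y - x) = N (x - y)" using norm_props(3)[OF assms, of "-1" "x - y"] by simp
    ultimately show ?thesis by linarith
  qed
  have lip: "dist (N x) (N y) \<le> B * dist x y" for x y
    using tri[of x y] N_upper2[OF assms, of "x - y"] unfolding B_def dist_real_def dist_norm by linarith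
  show ?thesis
  proof (rule continuous_onI)
    fix x e assume "x \<in> S" "(0::real) < e"
    show "\<exists>d>0. \<forall>x'\<in>S. dist x' x < d \<longrightarrow> dist (N x') (N x) \<le> e"
    proof (intro exI[of _ "e / (B + 1)"] conjI ballI impI)
      show "0 < e / (B + 1)" using \<open>0 < e\<close> B0 by simp
      fix x' assume "x' \<in> S" "dist x' x < e / (B + 1)"
      then have "(B + 1) * dist x' x \<le> e" using B0 by (simp add: field_simps)
      moreover have "B * dist x' x \<le> (B + 1) * dist x' x" by (simp add: algebra_simps)
      ultimately show "dist (N x') (N x) \<le> e" using lip[of x' x] by linarith
    qed
  qed
qed

lemma N_lower:
  fixes N :: "real^'n \<Rightarrow> real"
  assumes "is_norm N"
  obtains c where "c > 0" "\<And>x. c * norm x \<le> N x"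
proof -
  obtain j :: 'n where True by simp
  have ne: "sphere (0::real^'n) 1 \<noteq> {}"
    using norm_axis_1[of j] by (auto simp: sphere_def intro!: exI[of _ "axis j 1"])
  obtain x0 where x0: "x0 \<in> sphere 0 1" "\<And>y. y \<in> sphere 0 1 \<Longrightarrow> N x0 \<le> N y"
    using continuous_attains_inf[OF compact_sphere ne N_cont[OF assms]] by blast
  have "x0 \<noteq> 0" using x0(1) by auto
  then have pos: "N x0 > 0" using norm_props(1,2)[OF assms, of x0] by linarith
  show ?thesis
  proof (rule that[OF pos])
    fix x :: "real^'n"
    show "N x0 * norm x \<le> N x"
    proof (cases "x = 0")
      case True then show ?thesis by (simp add: norm_props(1)[OF assms])
    next
      case False
      have "(1 / norm x) *\<^sub>R x \<in> sphere 0 1" using False by simp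
      then have "N x0 \<le> N ((1 / norm x) *\<^sub>R x)" by (rule x0(2))
      also have "\<dots> = N x / norm x" using norm_props(3)[OF assms] by simp
      finally show ?thesis using False by (simp add: field_simps)
    qed
  qed
qed


lemma roundoff_grid: "roundoff \<delta> x \<in> grid \<delta>"
  unfolding roundoff_def grid_def
  by (rule CollectI, rule exI[of _ "\<lambda>j. \<lfloor>x $ j / \<delta> + 1/2\<rfloor>"], rule refl)

lemma roundoff_comp:
  assumes "\<delta> > 0"
  shows "- \<delta> / 2 \<le> (x - roundoff \<delta> x) $ j \<and> (x - roundoff \<delta> x) $ j < \<delta> / 2"
proof -
  define k where "k = \<lfloor>x $ j / \<delta> + 1/2\<rfloor>"
  have "real_of_int k \<le> x $ j / \<delta> + 1/2" "x $ j / \<delta> + 1/2 < real_of_int k + 1"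
    unfolding k_def by linarith+
  then have a: "\<delta> * real_of_int k \<le> x $ j + \<delta>/2" "x $ j + \<delta>/2 < \<delta> * real_of_int k + \<delta>"
    using assms by (simp_all add: field_simps)
  have "(x - roundoff \<delta> x) $ j = x $ j - \<delta> * real_of_int k"
    unfolding roundoff_def k_def by simp
  then show ?thesis using a by simp
qed

lemma theta_bound:
  fixes N :: "real^'n \<Rightarrow> real"
  assumes N: "is_norm N" and d: "\<delta> > 0"
  shows "N (roundoff \<delta> x - x) \<le> theta N \<delta>"
proof -
  define C where "C = cell \<delta> (\<lambda>_::'n. 0)"
  have C: "C = {x. \<forall>j. - \<delta> / 2 \<le> x $ j \<and> x $ j < \<delta> / 2}"
    unfolding C_def cell_def by auto
  define f where "f = (\<lambda>p::(real^'n) \<times> (real^'n). N (fst p - snd p))"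
  have bdd: "bdd_above (f ` (C \<times> C))"
  proof (rule bdd_aboveI2)
    fix p assume p: "p \<in> C \<times> C"
    have "f p \<le> (\<Sum>j\<in>UNIV. \<bar>(fst p - snd p) $ j\<bar> * N (axis j 1))"
      unfolding f_def by (rule N_upper[OF N])
    also have "\<dots> \<le> (\<Sum>j\<in>UNIV. \<delta> * N (axis j 1))"
    proof (rule sum_mono, rule mult_right_mono)
      fix j
      have "fst p \<in> C" "snd p \<in> C" using p by auto
      then have "- \<delta> / 2 \<le> fst p $ j \<and> fst p $ j < \<delta> / 2" "- \<delta> / 2 \<le> snd p $ j \<and> snd p $ j < \<delta> / 2"
        unfolding C by auto
      then show "\<bar>(fst p - snd p) $ j\<bar> \<le> \<delta>" by (simp add: abs_if)
      show "0 \<le> N (axis j 1)" by (rule norm_props(1)[OF N])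
    qed
    finally show "f p \<le> (\<Sum>j\<in>UNIV. \<delta> * N (axis j 1))" .
  qed
  define v where "v = x - roundoff \<delta> x"
  have vj: "- \<delta> / 2 \<le> v $ j \<and> v $ j < \<delta> / 2" for j
    unfolding v_def by (rule roundoff_comp[OF d])
  have "2 * N v \<le> (SUP p \<in> C \<times> C. f p)"
  proof (rule field_le_mult_one_interval)
    fix t :: real assume t: "0 < t" "t < 1"
    have inC: "t *\<^sub>R v \<in> C" "(- t) *\<^sub>R v \<in> C"
    proof -
      have "\<bar>t * v $ j\<bar> < \<delta> / 2" for j
      proof -
        have "\<bar>v $ j\<bar> \<le> \<delta> / 2" using vj[of j] by auto
        then have "\<bar>t * v $ j\<bar> \<le> t * (\<delta> / 2)" using t by (simp add: abs_mult mult_left_mono)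
        also have "\<dots> < \<delta> / 2" using t d by simp
        finally show ?thesis .
      qed
      then have hj: "- (\<delta>/2) < t * v $ j \<and> t * v $ j < \<delta>/2" for j
        by (metis abs_less_iff minus_less_iff)
      show "t *\<^sub>R v \<in> C" unfolding C mem_Collect_eq
      proof (intro allI conjI)
        fix j show "- \<delta> / 2 \<le> (t *\<^sub>R v) $ j" "(t *\<^sub>R v) $ j < \<delta> / 2" using hj[of j] by simp_all
      qed
      show "(- t) *\<^sub>R v \<in> C" unfolding C mem_Collect_eq
      proof (intro allI conjI)
        fix j show "- \<delta> / 2 \<le> ((- t) *\<^sub>R v) $ j" "((- t) *\<^sub>R v) $ j < \<delta> / 2" using hj[of j] by simp_all
      qed
    qed
    have "f (t *\<^sub>R v, (- t) *\<^sub>R v) \<le> (SUP p \<in> C \<times> C. f p)"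
      by (rule cSUP_upper[OF _ bdd]) (use inC in auto)
    moreover have "t *\<^sub>R v - (- t) *\<^sub>R v = (2 * t) *\<^sub>R v"
      by (simp add: scaleR_left_distrib[symmetric])
    ultimately have "N ((2 * t) *\<^sub>R v) \<le> (SUP p \<in> C \<times> C. f p)" unfolding f_def by simp
    then show "t * (2 * N v) \<le> (SUP p \<in> C \<times> C. f p)"
      using norm_props(3)[OF N, of "2 * t" v] t by simp
  qed
  moreover have "theta N \<delta> = (SUP p \<in> C \<times> C. f p) / 2"
    unfolding theta_def C_def f_def by simp
  moreover have "N (roundoff \<delta> x - x) = N v"
    using norm_props(3)[OF N, of "-1" v] unfolding v_def by simp
  ultimately show ?thesis by simp
qed

lemma grid_finite:
  fixes N :: "real^'n \<Rightarrow> real"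
  assumes N: "is_norm N" and d: "\<delta> > 0"
  shows "finite {g \<in> grid \<delta>. N (g - xf) \<le> R}"
proof -
  obtain c where c: "c > 0" "\<And>x. c * norm x \<le> N x" using N_lower[OF N] by blast
  define K where "K = \<lceil>(R / c + norm xf) / \<delta>\<rceil>"
  have sub: "{g \<in> grid \<delta>. N (g - xf) \<le> R} \<subseteq> (\<lambda>m. (\<chi> j. \<delta> * real_of_int (m j))) ` (PiE UNIV (\<lambda>_. {-K..K}))"
  proof
    fix g assume g: "g \<in> {g \<in> grid \<delta>. N (g - xf) \<le> R}"
    then obtain m where m: "g = (\<chi> j. \<delta> * real_of_int (m j))" unfolding grid_def by auto
    have "c * norm (g - xf) \<le> R" using g c(2)[of "g - xf"] by auto
    then have "norm (g - xf) \<le> R / c" using c(1) by (simp add: field_simps)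
    then have ng: "norm g \<le> R / c + norm xf" using norm_triangle_sub[of g xf] by linarith
    have "m j \<in> {-K..K}" for j
    proof -
      have "\<bar>\<delta> * real_of_int (m j)\<bar> \<le> norm g" using component_le_norm_cart[of g j] m by simp
      then have "\<delta> * \<bar>real_of_int (m j)\<bar> \<le> R / c + norm xf" using ng d by (simp add: abs_mult)
      then have "\<bar>real_of_int (m j)\<bar> \<le> (R / c + norm xf) / \<delta>" using d by (simp add: field_simps)
      then have "\<bar>real_of_int (m j)\<bar> \<le> real_of_int K" unfolding K_def by linarith
      then show ?thesis by auto
    qed
    then have "m \<in> PiE UNIV (\<lambda>_. {-K..K})" by auto
    then show "g \<in> (\<lambda>m. (\<chi> j. \<delta> * real_of_int (m j))) ` (PiE UNIV (\<lambda>_. {-K..K}))"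
      using m by blast
  qed
  show ?thesis by (rule finite_subset[OF sub]) (intro finite_imageI finite_PiE, auto)
qed

theorem theorem5:
  fixes N :: "real^'n \<Rightarrow> real" and w :: "real^'n \<Rightarrow> real^'n"
    and \<delta> lam :: real and xf :: "real^'n"
  assumes "is_norm N"
    and "\<delta> > 0"
    and "0 \<le> lam" and "lam < 1"
    and "\<forall>x y. N (w x - w y) \<le> lam * N (x - y)"
    and "w xf = xf"
  shows "absorbing \<delta> (\<lambda>y. roundoff \<delta> (w y))
           {y \<in> grid \<delta>. N (y - xf) \<le> theta N \<delta> / (1 - lam)}
       \<and> (\<lambda>y. roundoff \<delta> (w y)) ` {y \<in> grid \<delta>. N (y - xf) \<le> theta N \<delta> / (1 - lam)}
           \<subseteq> {y \<in> grid \<delta>. N (y - xf) \<le> theta N \<delta> / (1 - lam)}"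
proof -
  note N = assms(1) and d = assms(2) and lam = assms(3,4)
  define F where "F = (\<lambda>y. roundoff \<delta> (w y))"
  define r0 where "r0 = theta N \<delta> / (1 - lam)"
  have r0eq: "theta N \<delta> + lam * r0 = r0" unfolding r0_def using lam by (simp add: field_simps)
  have step: "N (F y - xf) \<le> theta N \<delta> + lam * N (y - xf)" for y
  proof -
    have "F y - xf = (roundoff \<delta> (w y) - w y) + (w y - w xf)" unfolding F_def using assms(6) by simp
    then have "N (F y - xf) \<le> N (roundoff \<delta> (w y) - w y) + N (w y - w xf)"
      using norm_props(4)[OF N] by metis
    then show ?thesis using theta_bound[OF N d, of "w y"] assms(5)[rule_format, of y xf] by linarith
  qed
  have inv: "N (F y - xf) \<le> r0" if "N (y - xf) \<le> r0" for y
  proof -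
    have "lam * N (y - xf) \<le> lam * r0" using that lam by (simp add: mult_left_mono)
    then show ?thesis using step[of y] r0eq by linarith
  qed
  have Fgrid: "F y \<in> grid \<delta>" for y unfolding F_def by (rule roundoff_grid)
  have itgrid: "(F ^^ i) x \<in> grid \<delta>" if "x \<in> grid \<delta>" for i x
    using that Fgrid by (cases i) auto
  have part2: "F ` {y \<in> grid \<delta>. N (y - xf) \<le> r0} \<subseteq> {y \<in> grid \<delta>. N (y - xf) \<le> r0}"
    using inv Fgrid by auto
  have absorb: "\<exists>K. \<forall>i\<ge>K. (F ^^ i) x \<in> {y \<in> grid \<delta>. N (y - xf) \<le> r0}" if x: "x \<in> grid \<delta>" for x
  proof -
    define e where "e = (\<lambda>i. N ((F ^^ i) x - xf))"
    have bound: "e i - r0 \<le> lam ^ i * (e 0 - r0)" for i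
    proof (induction i)
      case 0 then show ?case by simp
    next
      case (Suc i)
      have "e (Suc i) \<le> theta N \<delta> + lam * e i" unfolding e_def using step by simp
      then have "e (Suc i) - r0 \<le> lam * (e i - r0)" using r0eq by (simp add: algebra_simps)
      also have "\<dots> \<le> lam * (lam ^ i * (e 0 - r0))" using Suc lam by (simp add: mult_left_mono)
      finally show ?case by simp
    qed
    define V where "V = (\<lambda>g. N (g - xf) - r0) ` {g \<in> grid \<delta>. N (g - xf) \<le> r0 + 1 \<and> N (g - xf) > r0}"
    have finV: "finite V" unfolding V_def
      by (rule finite_imageI, rule finite_subset[OF _ grid_finite[OF N d, of xf "r0 + 1"]]) auto
    define \<epsilon> where "\<epsilon> = Min (insert 1 V)"
    have eps: "\<epsilon> > 0" unfolding \<epsilon>_def using finV by (auto simp: V_def)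
    have eps1: "\<epsilon> \<le> 1" and epsV: "\<And>v. v \<in> V \<Longrightarrow> \<epsilon> \<le> v" unfolding \<epsilon>_def using finV by auto
    have "(\<lambda>i. lam ^ i * \<bar>e 0 - r0\<bar>) \<longlonglongrightarrow> 0"
      by (rule tendsto_mult_left_zero, rule LIMSEQ_power_zero) (use lam in simp)
    then obtain i where i: "lam ^ i * \<bar>e 0 - r0\<bar> < \<epsilon>"
      using order_tendstoD(2)[OF _ eps] eventually_sequentially by (metis order_refl)
    have "lam ^ i * (e 0 - r0) \<le> lam ^ i * \<bar>e 0 - r0\<bar>" using lam by (simp add: mult_left_mono)
    then have ei: "e i < r0 + \<epsilon>" using bound[of i] i by linarith
    have "e i \<le> r0"
    proof (rule ccontr)
      assume "\<not> e i \<le> r0"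
      then have "e i - r0 \<in> V" unfolding V_def e_def using ei eps1 itgrid[OF x, of i]
        by (auto simp: e_def)
      then show False using epsV ei by fastforce
    qed
    have "e j \<le> r0" if "i \<le> j" for j
      using that
    proof (induction j rule: dec_induct)
      case base then show ?case by fact
    next
      case (step j) then show ?case using inv unfolding e_def by simp
    qed
    then show ?thesis using itgrid[OF x] unfolding e_def by blast
  qed
  show ?thesis
    unfolding absorbing_def F_def[symmetric] r0_def[symmetric] using part2 absorb by blast
qed

end
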